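(* Let $\rho_A,\rho_B\in\mathcal{P}(\mathcal{X})$ and let $(\rho,m)$, with $\rho:[0,1]\to\mathbb{R}^{\mathcal{X}}$ and $m:[0,1]\to\mathbb{R}^{\mathcal{X}\times\mathcal{X}}$ measurable, satisfy $\mathcal{E}(\rho,m)\le\bar E<\infty$. Then $m$ is bounded in $L^2((0,1),\mathbb{R}^{\mathcal{X}\times\mathcal{X}})$ and $\rho$ is bounded in $H^{1,2}((0,1),\mathbb{R}^{\mathcal{X}})\cap C^{0,1/2}([0,1],\mathbb{R}^{\mathcal{X}})$, with bounds depending only on $\mathcal{X}$ (with $Q,\pi$) and $\bar E$.
   Context: Let $\mathcal{X}$ be a finite set and $Q:\mathcal{X}\times\mathcal{X}\to[0,\infty)$ with $Q(x,x)=0$, the transition rate matrix of an irreducible continuous-time Markov chain which is reversible with respect to its unique stationary distribution $\pi:\mathcal{X}\to(0,1]$, $\sum_x\pi(x)=1$, i.e. $\pi(x)Q(x,y)=\pi(y)Q(y,x)$. Let $\mathcal{P}(\mathcal{X})=\{\rho:\mathcal{X}\to[0,\infty):\sum_x\pi(x)\rho(x)=1\}$. Inner products: $\langle\phi,\psi\rangle_\pi=\sum_x\phi(x)\psi(x)\pi(x)$, $\langle\Phi,\Psi\rangle_Q=\frac12\sum_{x,y}\Phi(x,y)\Psi(x,y)Q(x,y)\pi(x)$. Discrete gradient $(\nabla_{\mathcal{X}}\psi)(x,y)=\psi(x)-\psi(y)$. An averaging function $\theta:[0,\infty)^2\to[0,\infty)$ is fixed which is continuous, concave, 1-homogeneous,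 symmetric, $C^\infty$ on $(0,\infty)^2$, with $\theta(0,s)=\theta(s,0)=0$, $\theta(s,s)=s$, $\theta(s,t)>0$ for $s,t>0$, and nondecreasing in each argument; $\theta(s,t)=-\infty$ if $\min\{s,t\}<0$. Let $\alpha(s,t,m)=m^2/\theta(s,t)$ if $\theta(s,t)>0$, $0$ if $\theta(s,t)=0$ and $m=0$, $+\infty$ otherwise. $\mathcal{A}(\rho,m)=\frac12\int_0^1\sum_{x,y}\alpha(\rho(t,x),\rho(t,y),m(t,x,y))Q(x,y)\pi(x)\,dt$. $\mathcal{CE}(\rho_A,\rho_B)$ is the set of measurable pairs $(\rho,m)$ with $\int_0^1\langle\partial_t\varphi(t,\cdot),\rho(t,\cdot)\rangle_\pi+\langle\nabla_{\mathcal{X}}\varphi(t,\cdot),m(t,\cdot)\rangle_Q\,dt=\langle\varphi(1,\cdot),\rho_B\rangle_\pi-\langle\varphi(0,\cdot),\rho_A\rangle_\pi$ for all $\varphi\in C^1([0,1],\mathbb{R}^{\mathcal{X}})$. $\mathcal{E}(\rho,m)=\mathcal{A}(\rho,m)$ if $(\rho,m)\in\mathcal{CE}(\rho_A,\rho_B)$ and $+\infty$ otherwise. *)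

theory Defs
  imports "HOL-Analysis.Analysis"
begin

definition markov_setting :: "('x::finite \<Rightarrow> 'x \<Rightarrow> real) \<Rightarrow> ('x \<Rightarrow> real) \<Rightarrow> bool" where
  "markov_setting Q \<pi> \<longleftrightarrow>
     (\<forall>x y. Q x y \<ge> 0) \<and> (\<forall>x. Q x x = 0) \<and>
     (\<forall>x y. (x, y) \<in> {(a, b). Q a b > 0}\<^sup>*) \<and>
     (\<forall>x. 0 < \<pi> x \<and> \<pi> x \<le> 1) \<and> (\<Sum>x\<in>UNIV. \<pi> x) = 1 \<and>
     (\<forall>x y. \<pi> x * Q x y = \<pi> y * Q y x)"

definition prob_densities :: "('x::finite \<Rightarrow> real) \<Rightarrow> ('x \<Rightarrow> real) set" where
  "prob_densities \<pi> = {\<rho>. (\<forall>x. \<rho> x \<ge> 0) \<and> (\<Sum>x\<in>UNIV. \<pi> x * \<rho> x) = 1}"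

definition inner_pi :: "('x::finite \<Rightarrow> real) \<Rightarrow> ('x \<Rightarrow> real) \<Rightarrow> ('x \<Rightarrow> real) \<Rightarrow> real" where
  "inner_pi \<pi> \<phi> \<psi> = (\<Sum>x\<in>UNIV. \<phi> x * \<psi> x * \<pi> x)"

definition inner_Q :: "('x::finite \<Rightarrow> 'x \<Rightarrow> real) \<Rightarrow> ('x \<Rightarrow> real)
    \<Rightarrow> ('x \<Rightarrow> 'x \<Rightarrow> real) \<Rightarrow> ('x \<Rightarrow> 'x \<Rightarrow> real) \<Rightarrow> real" where
  "inner_Q Q \<pi> \<Phi> \<Psi> = (1/2) * (\<Sum>x\<in>UNIV. \<Sum>y\<in>UNIV. \<Phi> x y * \<Psi> x y * Q x y * \<pi> x)"

definition grad_X :: "('x \<Rightarrow> real) \<Rightarrow> 'x \<Rightarrow> 'x \<Rightarrow> real" where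
  "grad_X \<psi> x y = \<psi> x - \<psi> y"

text \<open>C-infinity on an open set S, for functions of two real variables: there is a
  family of functions containing f which is closed under taking (continuous) partial
  derivatives (with respect to both variables).\<close>
definition smooth2_on :: "(real \<times> real) set \<Rightarrow> (real \<times> real \<Rightarrow> real) \<Rightarrow> bool" where
  "smooth2_on S f \<longleftrightarrow> (\<exists>F. f \<in> F \<and> (\<forall>g\<in>F. continuous_on S g \<and>
      (\<exists>g1\<in>F. \<exists>g2\<in>F. \<forall>z\<in>S.
         (g has_derivative (\<lambda>h. fst h * g1 z + snd h * g2 z)) (at z))))"

definition averaging_function :: "(real \<Rightarrow> real \<Rightarrow> real) \<Rightarrow> bool" where
  "averaging_function \<theta> \<longleftrightarrow>
     continuous_on ({0..} \<times> {0..}) (\<lambda>(s, t). \<theta> s t) \<and>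
     concave_on ({0..} \<times> {0..}) (\<lambda>(s, t). \<theta> s t) \<and>
     (\<forall>l s t. l \<ge> 0 \<longrightarrow> s \<ge> 0 \<longrightarrow> t \<ge> 0 \<longrightarrow> \<theta> (l * s) (l * t) = l * \<theta> s t) \<and>
     (\<forall>s t. s \<ge> 0 \<longrightarrow> t \<ge> 0 \<longrightarrow> \<theta> s t = \<theta> t s) \<and>
     smooth2_on ({0<..} \<times> {0<..}) (\<lambda>(s, t). \<theta> s t) \<and>
     (\<forall>s. s \<ge> 0 \<longrightarrow> \<theta> 0 s = 0 \<and> \<theta> s 0 = 0) \<and>
     (\<forall>s. s \<ge> 0 \<longrightarrow> \<theta> s s = s) \<and>
     (\<forall>s t. s > 0 \<longrightarrow> t > 0 \<longrightarrow> \<theta> s t > 0) \<and>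
     (\<forall>s s' t. 0 \<le> s \<longrightarrow> s \<le> s' \<longrightarrow> 0 \<le> t \<longrightarrow> \<theta> s t \<le> \<theta> s' t) \<and>
     (\<forall>s t t'. 0 \<le> s \<longrightarrow> 0 \<le> t \<longrightarrow> t \<le> t' \<longrightarrow> \<theta> s t \<le> \<theta> s t')"

text \<open>theta is (by convention) minus infinity if an argument is negative; then
  alpha is +infinity.\<close>
definition alpha :: "(real \<Rightarrow> real \<Rightarrow> real) \<Rightarrow> real \<Rightarrow> real \<Rightarrow> real \<Rightarrow> ennreal" where
  "alpha \<theta> s t m =
     (if s \<ge> 0 \<and> t \<ge> 0 \<and> \<theta> s t > 0 then ennreal (m\<^sup>2 / \<theta> s t)
      else if s \<ge> 0 \<and> t \<ge> 0 \<and> \<theta> s t = 0 \<and> m = 0 then 0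
      else \<infinity>)"

definition action :: "(real \<Rightarrow> real \<Rightarrow> real) \<Rightarrow> ('x::finite \<Rightarrow> 'x \<Rightarrow> real) \<Rightarrow> ('x \<Rightarrow> real)
    \<Rightarrow> (real \<Rightarrow> 'x \<Rightarrow> real) \<Rightarrow> (real \<Rightarrow> 'x \<Rightarrow> 'x \<Rightarrow> real) \<Rightarrow> ennreal" where
  "action \<theta> Q \<pi> \<rho> m = (1/2) * (\<integral>\<^sup>+ t\<in>{0..1}.
      (\<Sum>x\<in>UNIV. \<Sum>y\<in>UNIV. alpha \<theta> (\<rho> t x) (\<rho> t y) (m t x y) * ennreal (Q x y * \<pi> x)) \<partial>lborel)"

definition C1_test :: "(real \<Rightarrow> 'x \<Rightarrow> real) \<Rightarrow> (real \<Rightarrow> 'x \<Rightarrow> real) \<Rightarrow> bool" where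
  "C1_test \<phi> \<phi>' \<longleftrightarrow> (\<forall>x. (\<forall>t\<in>{0..1}. ((\<lambda>s. \<phi> s x) has_real_derivative \<phi>' t x) (at t within {0..1}))
                         \<and> continuous_on {0..1} (\<lambda>t. \<phi>' t x))"

definition CE :: "('x::finite \<Rightarrow> 'x \<Rightarrow> real) \<Rightarrow> ('x \<Rightarrow> real) \<Rightarrow> ('x \<Rightarrow> real) \<Rightarrow> ('x \<Rightarrow> real)
    \<Rightarrow> ((real \<Rightarrow> 'x \<Rightarrow> real) \<times> (real \<Rightarrow> 'x \<Rightarrow> 'x \<Rightarrow> real)) set" where
  "CE Q \<pi> \<rho>A \<rho>B = {(\<rho>, m).
     (\<forall>x. set_borel_measurable lborel {0..1} (\<lambda>t. \<rho> t x)) \<and>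
     (\<forall>x y. set_borel_measurable lborel {0..1} (\<lambda>t. m t x y)) \<and>
     (\<forall>\<phi> \<phi>'. C1_test \<phi> \<phi>' \<longrightarrow>
        set_integrable lborel {0..1}
          (\<lambda>t. inner_pi \<pi> (\<phi>' t) (\<rho> t) + inner_Q Q \<pi> (grad_X (\<phi> t)) (m t)) \<and>
        (LINT t:{0..1}|lborel. inner_pi \<pi> (\<phi>' t) (\<rho> t) + inner_Q Q \<pi> (grad_X (\<phi> t)) (m t))
          = inner_pi \<pi> (\<phi> 1) \<rho>B - inner_pi \<pi> (\<phi> 0) \<rho>A)}"

definition energy :: "(real \<Rightarrow> real \<Rightarrow> real) \<Rightarrow> ('x::finite \<Rightarrow> 'x \<Rightarrow> real) \<Rightarrow> ('x \<Rightarrow> real)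
    \<Rightarrow> ('x \<Rightarrow> real) \<Rightarrow> ('x \<Rightarrow> real)
    \<Rightarrow> (real \<Rightarrow> 'x \<Rightarrow> real) \<Rightarrow> (real \<Rightarrow> 'x \<Rightarrow> 'x \<Rightarrow> real) \<Rightarrow> ennreal" where
  "energy \<theta> Q \<pi> \<rho>A \<rho>B \<rho> m =
     (if (\<rho>, m) \<in> CE Q \<pi> \<rho>A \<rho>B then action \<theta> Q \<pi> \<rho> m else \<infinity>)"

end

theory Submission
  imports Defs
begin

lemma integrable_ind_mult:
  fixes f :: "'a \<Rightarrow> real"
  shows "A \<in> sets M \<Longrightarrow> integrable M f \<Longrightarrow> integrable M (\<lambda>x. indicator A x * f x)"
  using integrable_mult_indicator[of A M f] by simp

lemma FL:
  fixes h :: "real \<Rightarrow> real"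
  assumes hi: "set_integrable lborel {0..1} h"
  and h0: "\<And>a. (LINT t:{0..1}|lborel. indicator {a<..} t * h t) = 0"
  shows "AE t in lborel. t \<in> {0..1} \<longrightarrow> h t = 0"
proof -
  define H where "H = (\<lambda>t. indicator {0..1::real} t * h t)"
  have Hi: "integrable lborel H" using hi by (simp add: H_def set_integrable_def)
  have Hm[measurable]: "H \<in> borel_measurable lborel" using Hi by (rule borel_measurable_integrable)
  define P where "P = (\<lambda>t. max (H t) 0)"
  define Nn where "Nn = (\<lambda>t. max (- H t) 0)"
  have Pi: "integrable lborel P" unfolding P_def using Hi by (intro integrable_max) auto
  have Ni: "integrable lborel Nn" unfolding Nn_def using Hi by (intro integrable_max) auto
  have Pm[measurable]: "P \<in> borel_measurable borel" using Pi by auto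
  have Nm[measurable]: "Nn \<in> borel_measurable borel" using Ni by auto
  have eqPN: "(\<integral>t. indicator {a<..} t * P t \<partial>lborel) = (\<integral>t. indicator {a<..} t * Nn t \<partial>lborel)" for a
  proof -
    have "(\<integral>t. indicator {a<..} t * P t \<partial>lborel) - (\<integral>t. indicator {a<..} t * Nn t \<partial>lborel)
        = (\<integral>t. indicator {a<..} t * P t - indicator {a<..} t * Nn t \<partial>lborel)"
      by (rule Bochner_Integration.integral_diff[symmetric])
        (auto intro!: integrable_ind_mult Pi Ni)
    also have "\<dots> = (\<integral>t. indicator {a<..} t * H t \<partial>lborel)"
      by (rule Bochner_Integration.integral_cong) (auto simp: P_def Nn_def max_def indicator_def)
    also have "\<dots> = (LINT t:{0..1}|lborel. indicator {a<..} t * h t)"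
      by (simp add: set_lebesgue_integral_def H_def mult_ac)
    finally show ?thesis using h0[of a] by simp
  qed
  define M where "M = density lborel (\<lambda>t. ennreal (P t))"
  define N where "N = density lborel (\<lambda>t. ennreal (Nn t))"
  have eM: "emeasure M {a<..} = ennreal (\<integral>t. indicator {a<..} t * P t \<partial>lborel)" for a
  proof -
    have "emeasure M {a<..} = (\<integral>\<^sup>+t. ennreal (indicator {a<..} t * P t) \<partial>lborel)"
      unfolding M_def by (subst emeasure_density) (auto intro!: nn_integral_cong simp: indicator_def)
    also have "\<dots> = ennreal (\<integral>t. indicator {a<..} t * P t \<partial>lborel)"
      by (rule nn_integral_eq_integral) (use Pi in \<open>auto intro!: integrable_ind_mult simp: P_def\<close>)
    finally show ?thesis .
  qed
  have eN: "emeasure N {a<..} = ennreal (\<integral>t. indicator {a<..} t * Nn t \<partial>lborel)" for a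
  proof -
    have "emeasure N {a<..} = (\<integral>\<^sup>+t. ennreal (indicator {a<..} t * Nn t) \<partial>lborel)"
      unfolding N_def by (subst emeasure_density) (auto intro!: nn_integral_cong simp: indicator_def)
    also have "\<dots> = ennreal (\<integral>t. indicator {a<..} t * Nn t \<partial>lborel)"
      by (rule nn_integral_eq_integral) (use Ni in \<open>auto intro!: integrable_ind_mult simp: Nn_def\<close>)
    finally show ?thesis .
  qed
  have "M = N"
  proof (rule measure_eqI_lessThan)
    show "emeasure M {x<..} < \<infinity>" for x using eM[of x] by simp
    show "emeasure M {x<..} = emeasure N {x<..}" for x using eM[of x] eN[of x] eqPN[of x] by simp
  qed (auto simp: M_def N_def)
  then have "AE t in lborel. ennreal (P t) = ennreal (Nn t)"
    unfolding M_def N_def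
    by (intro sigma_finite_measure.density_unique[OF sigma_finite_lborel]) (auto simp: P_def Nn_def)
  then show ?thesis
    by eventually_elim (auto simp: P_def Nn_def H_def max_def split: if_splits)
qed

lemma fubini_tri:
  fixes k G :: "real \<Rightarrow> real"
  assumes km[measurable]: "k \<in> borel_measurable borel" and kb: "\<And>s. \<bar>k s\<bar> \<le> 1"
   and Gi: "set_integrable lborel {0..1} G"
  shows "(LINT t:{0..1}|lborel. (LINT s:{t..1}|lborel. k s) * G t)
       = (LINT s:{0..1}|lborel. k s * (LINT t:{0..s}|lborel. G t))"
proof -
  define G' where "G' = (\<lambda>t. indicator {0..1::real} t * G t)"
  have G'i: "integrable lborel G'" using Gi by (simp add: G'_def set_integrable_def)
  have G'm[measurable]: "G' \<in> borel_measurable borel" using G'i by auto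
  define F where "F = (\<lambda>t s. if 0 \<le> t \<and> t \<le> s \<and> s \<le> (1::real) then k s * G' t else 0)"
  have Fm[measurable]: "case_prod F \<in> borel_measurable (lborel \<Otimes>\<^sub>M lborel)"
    unfolding F_def by measurable
  have i1: "integrable lborel (indicator {0..1::real} :: real \<Rightarrow> real)"
    by (simp add: integrable_indicator_iff)
  have Fb: "\<bar>F t s\<bar> \<le> \<bar>G' t\<bar> * indicator {0..1} s" for t s
    using kb[of s] by (auto simp: F_def abs_mult indicator_def intro: mult_left_le_one_le)
  have Fb2: "\<bar>F t s\<bar> \<le> \<bar>k s\<bar> * \<bar>G' t\<bar>" for t s
    by (auto simp: F_def abs_mult)
  have intF: "integrable (lborel \<Otimes>\<^sub>M lborel) (case_prod F)"
  proof (rule lborel_pair.Fubini_integrable)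
    show "integrable lborel (\<lambda>t. LINT s|lborel. norm (case_prod F (t, s)))"
    proof (rule Bochner_Integration.integrable_bound[OF G'i])
      show "AE t in lborel. norm (LINT s|lborel. norm (case_prod F (t, s))) \<le> norm (G' t)"
      proof (rule AE_I2)
        fix t
        have "(LINT s|lborel. norm (F t s)) \<le> (LINT s|lborel. \<bar>G' t\<bar> * indicator {0..1} (s::real))"
          by (rule Bochner_Integration.integral_mono') (use Fb i1 in \<open>auto intro!: integrable_mult_right\<close>)
        also have "\<dots> = \<bar>G' t\<bar>" using i1 by simp
        finally show "norm (LINT s|lborel. norm (case_prod F (t, s))) \<le> norm (G' t)"
          by simp
      qed
    qed measurable
    show "AE t in lborel. integrable lborel (\<lambda>s. case_prod F (t, s))"
    proof (rule AE_I2)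
      fix t
      show "integrable lborel (\<lambda>s. case_prod F (t, s))"
        by (rule Bochner_Integration.integrable_bound[where f="\<lambda>s. \<bar>G' t\<bar> * indicator {0..1} s"])
          (use i1 Fb in auto)
    qed
  qed fact
  have L1: "(LINT s|lborel. F t s) = indicator {0..1} t * ((LINT s:{t..1}|lborel. k s) * G t)" for t
  proof -
    have "(LINT s|lborel. F t s) = (LINT s|lborel. (indicator {t..1} s * k s) * G' t)"
      by (rule Bochner_Integration.integral_cong) (auto simp: F_def G'_def indicator_def)
    also have "\<dots> = (LINT s|lborel. indicator {t..1} s * k s) * G' t" by simp
    finally show ?thesis
      by (simp add: G'_def set_lebesgue_integral_def indicator_def)
  qed
  have L: "(LINT t:{0..1}|lborel. (LINT s:{t..1}|lborel. k s) * G t) = (LINT t|lborel. LINT s|lborel. F t s)"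
    using L1 by (simp add: set_lebesgue_integral_def)
  have R1: "(LINT t|lborel. F t s) = indicator {0..1} s * (k s * (LINT t:{0..s}|lborel. G t))" for s
  proof -
    have "(LINT t|lborel. F t s) = (LINT t|lborel. k s * indicator {0..1} s * (indicator {0..s} t * G t))"
      by (rule Bochner_Integration.integral_cong) (auto simp: F_def G'_def indicator_def)
    also have "\<dots> = k s * indicator {0..1} s * (LINT t|lborel. indicator {0..s} t * G t)" by simp
    finally show ?thesis
      by (simp add: set_lebesgue_integral_def)
  qed
  have R: "(LINT s:{0..1}|lborel. k s * (LINT t:{0..s}|lborel. G t)) = (LINT s|lborel. LINT t|lborel. F t s)"
    using R1 by (simp add: set_lebesgue_integral_def)
  show ?thesis unfolding L R
    using lborel_pair.Fubini_integral[OF intF] by simp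
qed

lemma psi_eq:
  fixes k :: "real \<Rightarrow> real" assumes k: "continuous_on UNIV k"
  shows "(\<lambda>x. LINT s:{x..1}|lborel. k s) = (\<lambda>x. integral {x..1} k)"
proof
  fix x :: real
  have "continuous_on {x..1} k" using k by (rule continuous_on_subset) auto
  then show "(LINT s:{x..1}|lborel. k s) = integral {x..1} k"
    by (intro set_borel_integral_eq_integral(2) borel_integrable_atLeastAtMost')
qed

lemma psi_deriv:
  fixes k :: "real \<Rightarrow> real" assumes k: "continuous_on UNIV k" and t: "t \<in> {0..1}"
  shows "((\<lambda>x. LINT s:{x..1}|lborel. k s) has_real_derivative - k t) (at t within {0..1})"
  unfolding psi_eq[OF k]
  by (rule integral_has_real_derivative') (use k t in \<open>auto intro: continuous_on_subset\<close>)

definition dlt :: "'x \<Rightarrow> 'x \<Rightarrow> real" where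
  "dlt z = (\<lambda>x. if x = z then 1 else 0)"

lemma inner_pi_dlt:
  fixes \<pi> f :: "'x::finite \<Rightarrow> real"
  shows "inner_pi \<pi> (\<lambda>x. dlt z x * c) f = c * f z * \<pi> z"
proof -
  have "(\<Sum>x\<in>UNIV. dlt z x * c * f x * \<pi> x) = (\<Sum>x\<in>UNIV. if x = z then c * f x * \<pi> x else 0)"
    by (rule sum.cong) (auto simp: dlt_def)
  also have "\<dots> = c * f z * \<pi> z" by simp
  finally show ?thesis unfolding inner_pi_def .
qed

lemma inner_Q_grad_scale:
  fixes Q :: "'x::finite \<Rightarrow> 'x \<Rightarrow> real"
  shows "inner_Q Q \<pi> (grad_X (\<lambda>x. f x * c)) M = c * inner_Q Q \<pi> (grad_X f) M"
  unfolding inner_Q_def grad_X_def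
  by (simp add: sum_distrib_left algebra_simps)

lemma nn_integral_cmult_le:
  fixes c :: real
  assumes c: "0 \<le> c"
  shows "(\<integral>\<^sup>+x. ennreal c * f x \<partial>M) \<le> ennreal c * integral\<^sup>N M f"
proof (cases "c = 0")
  case True then show ?thesis by simp
next
  case False
  with c have cp: "0 < c" by simp
  have inv: "ennreal (1/c) * ennreal c = 1"
    using cp by (simp flip: ennreal_mult)
  show ?thesis
    unfolding nn_integral_def[of M "\<lambda>x. ennreal c * f x"]
  proof (rule SUP_least)
    fix h assume h: "h \<in> {h. simple_function M h \<and> h \<le> (\<lambda>x. ennreal c * f x)}"
    define h' where "h' = (\<lambda>x. ennreal (1/c) * h x)"
    have sh': "simple_function M h'" using h by (auto simp: h'_def)
    have le': "h' \<le> f"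
    proof (rule le_funI)
      fix x
      have "h x \<le> ennreal c * f x" using h by (auto simp: le_fun_def)
      then have "ennreal (1/c) * h x \<le> ennreal (1/c) * (ennreal c * f x)" by (rule mult_left_mono) simp
      also have "\<dots> = f x" by (simp add: mult.assoc[symmetric] inv)
      finally show "h' x \<le> f x" by (simp add: h'_def)
    qed
    have "integral\<^sup>S M h = integral\<^sup>S M (\<lambda>x. ennreal c * h' x)"
      by (rule simple_integral_cong) (simp add: h'_def mult.assoc[symmetric] inv mult.commute[of "ennreal c"])
    also have "\<dots> = ennreal c * integral\<^sup>S M h'" using sh' by simp
    also have "\<dots> \<le> ennreal c * integral\<^sup>N M f"
      unfolding nn_integral_def
      by (rule mult_left_mono) (auto intro!: SUP_upper sh' le')
    finally show "integral\<^sup>S M h \<le> ennreal c * integral\<^sup>N M f" .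
  qed
qed

lemma theta_le:
  assumes af: "averaging_function \<theta>" and "0 \<le> s" "s \<le> R" "0 \<le> t" "t \<le> R"
  shows "\<theta> s t \<le> R"
proof -
  have "\<theta> s t \<le> \<theta> R t" using af assms unfolding averaging_function_def by blast
  also have "\<dots> \<le> \<theta> R R" using af assms unfolding averaging_function_def by (meson order_trans)
  also have "\<dots> = R" using af assms unfolding averaging_function_def by (meson order_trans)
  finally show ?thesis .
qed

lemma alpha_bound:
  assumes af: "averaging_function \<theta>" and R: "0 < R" and "0 \<le> s" "s \<le> R" "0 \<le> t" "t \<le> R"
  shows "ennreal (mm\<^sup>2) \<le> ennreal R * alpha \<theta> s t mm"
proof -
  have th: "\<theta> s t \<le> R" using theta_le[OF af] assms by blast
  consider (a) "\<theta> s t > 0" | (b) "\<theta> s t = 0 \<and> mm = 0" | (c) "\<not> \<theta> s t > 0" "\<not> (\<theta> s t = 0 \<and> mm = 0)" by blast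
  then show ?thesis
  proof cases
    case a
    have "mm\<^sup>2 = \<theta> s t * (mm\<^sup>2 / \<theta> s t)" using a by simp
    also have "\<dots> \<le> R * (mm\<^sup>2 / \<theta> s t)" using a th by (intro mult_right_mono) auto
    finally have "ennreal (mm\<^sup>2) \<le> ennreal (R * (mm\<^sup>2 / \<theta> s t))" by (rule ennreal_leI)
    also have "\<dots> = ennreal R * ennreal (mm\<^sup>2 / \<theta> s t)" using R by (intro ennreal_mult') simp
    finally show ?thesis using a assms by (simp add: alpha_def)
  next
    case b then show ?thesis by simp
  next
    case c
    then have "alpha \<theta> s t mm = \<infinity>" using assms by (auto simp: alpha_def)
    then show ?thesis using R by (simp add: ennreal_mult_top)
  qed
qed

definition Rc :: "('x::finite \<Rightarrow> real) \<Rightarrow> real" where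
  "Rc \<pi> = (\<Sum>x\<in>UNIV. 1 / \<pi> x)"

definition Wc :: "('x::finite \<Rightarrow> 'x \<Rightarrow> real) \<Rightarrow> ('x \<Rightarrow> real) \<Rightarrow> real" where
  "Wc Q \<pi> = (\<Sum>x\<in>UNIV. \<Sum>y\<in>UNIV. Q x y * \<pi> x)"

definition Cst :: "('x::finite \<Rightarrow> 'x \<Rightarrow> real) \<Rightarrow> ('x \<Rightarrow> real) \<Rightarrow> real \<Rightarrow> real" where
  "Cst Q \<pi> Ebar = Rc \<pi> * max Ebar 0 + real CARD('x) * Rc \<pi> * Wc Q \<pi> / 2 * (Rc \<pi> * max Ebar 0)
     + (Rc \<pi>)\<^sup>2 + Rc \<pi> + sqrt (Rc \<pi> * (real CARD('x) * Rc \<pi> * Wc Q \<pi> / 2 * (Rc \<pi> * max Ebar 0)))"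

locale L =
  fixes Q :: "'x::finite \<Rightarrow> 'x \<Rightarrow> real" and \<pi> :: "'x \<Rightarrow> real"
    and \<theta> :: "real \<Rightarrow> real \<Rightarrow> real" and Ebar :: real
    and \<rho>A \<rho>B :: "'x \<Rightarrow> real" and \<rho> :: "real \<Rightarrow> 'x \<Rightarrow> real" and m :: "real \<Rightarrow> 'x \<Rightarrow> 'x \<Rightarrow> real"
  assumes ms: "markov_setting Q \<pi>" and af: "averaging_function \<theta>"
    and pA: "\<rho>A \<in> prob_densities \<pi>" and ce: "(\<rho>, m) \<in> CE Q \<pi> \<rho>A \<rho>B"
    and act: "action \<theta> Q \<pi> \<rho> m \<le> ennreal Ebar"
begin

definition G :: "'x \<Rightarrow> real \<Rightarrow> real" where
  "G z t = inner_Q Q \<pi> (grad_X (dlt z)) (m t)"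

lemma pi_pos: "0 < \<pi> x" using ms by (simp add: markov_setting_def)
lemma Q_nn: "0 \<le> Q x y" using ms by (simp add: markov_setting_def)
lemma rev: "\<pi> x * Q x y = \<pi> y * Q y x" using ms by (simp add: markov_setting_def)
lemma pi_sum: "(\<Sum>x\<in>UNIV. \<pi> x) = 1" using ms by (simp add: markov_setting_def)
lemma pA_nn: "0 \<le> \<rho>A x" using pA by (simp add: prob_densities_def)
lemma pA_sum: "(\<Sum>x\<in>UNIV. \<pi> x * \<rho>A x) = 1" using pA by (simp add: prob_densities_def)

lemma CE_test:
  assumes d: "\<And>t. t \<in> {0..1} \<Longrightarrow> (\<psi> has_real_derivative \<psi>' t) (at t within {0..1})"
    and c: "continuous_on {0..1} \<psi>'"
  shows "set_integrable lborel {0..1} (\<lambda>t. \<psi>' t * \<rho> t z * \<pi> z + \<psi> t * G z t)"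
    "(LINT t:{0..1}|lborel. \<psi>' t * \<rho> t z * \<pi> z + \<psi> t * G z t) = \<psi> 1 * \<rho>B z * \<pi> z - \<psi> 0 * \<rho>A z * \<pi> z"
proof -
  define \<phi> where "\<phi> = (\<lambda>t x. dlt z x * \<psi> t)"
  define \<phi>' where "\<phi>' = (\<lambda>t x. dlt z x * \<psi>' t)"
  have "C1_test \<phi> \<phi>'"
    unfolding C1_test_def \<phi>_def \<phi>'_def
    by (auto intro!: DERIV_cmult d continuous_intros c)
  with ce have *: "set_integrable lborel {0..1}
          (\<lambda>t. inner_pi \<pi> (\<phi>' t) (\<rho> t) + inner_Q Q \<pi> (grad_X (\<phi> t)) (m t)) \<and>
        (LINT t:{0..1}|lborel. inner_pi \<pi> (\<phi>' t) (\<rho> t) + inner_Q Q \<pi> (grad_X (\<phi> t)) (m t))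
          = inner_pi \<pi> (\<phi> 1) \<rho>B - inner_pi \<pi> (\<phi> 0) \<rho>A"
    unfolding CE_def by auto
  have e: "inner_pi \<pi> (\<phi>' t) (\<rho> t) + inner_Q Q \<pi> (grad_X (\<phi> t)) (m t) = \<psi>' t * \<rho> t z * \<pi> z + \<psi> t * G z t" for t
    unfolding \<phi>_def \<phi>'_def G_def by (simp add: inner_pi_dlt inner_Q_grad_scale)
  show "set_integrable lborel {0..1} (\<lambda>t. \<psi>' t * \<rho> t z * \<pi> z + \<psi> t * G z t)"
    using * unfolding e by simp
  show "(LINT t:{0..1}|lborel. \<psi>' t * \<rho> t z * \<pi> z + \<psi> t * G z t) = \<psi> 1 * \<rho>B z * \<pi> z - \<psi> 0 * \<rho>A z * \<pi> z"
    using * unfolding e by (simp add: \<phi>_def inner_pi_dlt)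
qed

lemma G_int: "set_integrable lborel {0..1} (G z)"
  using CE_test(1)[of "\<lambda>_. 1" "\<lambda>_. 0" z] by simp

lemma tG_int: "set_integrable lborel {0..1} (\<lambda>t. t * G z t)"
proof -
  have i: "integrable lborel (\<lambda>t. indicator {0..1} t *\<^sub>R G z t)"
    using G_int[of z] by (simp add: set_integrable_def)
  then have m: "(\<lambda>t. indicator {0..1} t *\<^sub>R G z t) \<in> borel_measurable lborel" by auto
  have e: "(\<lambda>t. indicator {0..1} t *\<^sub>R (t * G z t)) = (\<lambda>t. t * (indicator {0..1} t *\<^sub>R G z t))"
    by (auto simp: fun_eq_iff)
  have "integrable lborel (\<lambda>t. indicator {0..1} t *\<^sub>R (t * G z t))"
    unfolding e
  proof (rule Bochner_Integration.integrable_bound[OF i])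
    show "(\<lambda>t. t * (indicator {0..1} t *\<^sub>R G z t)) \<in> borel_measurable lborel"
      using m by measurable
    show "AE t in lborel. norm (t * (indicator {0..1} t *\<^sub>R G z t)) \<le> norm (indicator {0..1} t *\<^sub>R G z t)"
      by (rule AE_I2) (auto simp: indicator_def abs_mult intro: mult_left_le_one_le)
  qed
  then show ?thesis by (simp add: set_integrable_def)
qed

lemma rho_int: "set_integrable lborel {0..1} (\<lambda>t. \<rho> t z)"
proof -
  have "set_integrable lborel {0..1} (\<lambda>t. 1 * \<rho> t z * \<pi> z + t * G z t)"
    using CE_test(1)[of "\<lambda>t. t" "\<lambda>_. 1" z] by simp
  then have "set_integrable lborel {0..1} (\<lambda>t. (1 * \<rho> t z * \<pi> z + t * G z t) - t * G z t)"
    using tG_int by (intro set_integral_diff) auto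
  then have "set_integrable lborel {0..1} (\<lambda>t. (\<rho> t z * \<pi> z) / \<pi> z)"
    by (intro set_integrable_divide) simp
  then show ?thesis using pi_pos[of z] by simp
qed

definition g :: "real \<Rightarrow> 'x \<Rightarrow> real" where
  "g t z = indicator {0..1} t * G z t / \<pi> z"

definition r :: "real \<Rightarrow> 'x \<Rightarrow> real" where
  "r t z = \<rho>A z + (LINT s:{0..t}|lborel. g s z)"

lemma g_int: "integrable lborel (\<lambda>t. g t z)"
  using G_int[of z] unfolding g_def set_integrable_def by simp

lemma g_meas[measurable]: "(\<lambda>t. g t z) \<in> borel_measurable borel"
  using g_int[of z] by auto

lemma g_set_int: "A \<in> sets lborel \<Longrightarrow> set_integrable lborel A (\<lambda>t. g t z)"
  unfolding set_integrable_def using g_int[of z] by (intro integrable_mult_indicator)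

lemma r_integral: "t \<in> {0..1} \<Longrightarrow> (LINT s:{0..t}|lborel. g s z) = integral {0..t} (\<lambda>s. g s z)"
  by (rule set_borel_integral_eq_integral(2)) (simp add: g_set_int)

lemma r_cont: "continuous_on {0..1} (\<lambda>t. r t z)"
proof -
  have "(\<lambda>s. g s z) integrable_on {0..1}"
    by (rule set_borel_integral_eq_integral(1)) (simp add: g_set_int)
  then have "continuous_on {0..1} (\<lambda>t. integral {0..t} (\<lambda>s. g s z))"
    by (rule indefinite_integral_continuous_1)
  then have "continuous_on {0..1} (\<lambda>t. \<rho>A z + integral {0..t} (\<lambda>s. g s z))"
    by (intro continuous_intros)
  then show ?thesis
    by (rule continuous_on_eq) (simp add: r_def r_integral)
qed

lemma r0: "r 0 z = \<rho>A z"
  using r_integral[of 0 z] by (simp add: r_def)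

lemma LG: "s \<in> {0..1} \<Longrightarrow> (LINT t:{0..s}|lborel. G z t) = \<pi> z * (r s z - \<rho>A z)"
proof -
  assume s: "s \<in> {0..1}"
  have "(LINT t:{0..s}|lborel. g t z) = (LINT t:{0..s}|lborel. G z t / \<pi> z)"
    by (rule set_lebesgue_integral_cong) (use s in \<open>auto simp: g_def\<close>)
  also have "\<dots> = (LINT t:{0..s}|lborel. G z t) / \<pi> z" by simp
  finally show ?thesis using pi_pos[of z] by (simp add: r_def)
qed

lemma rho_meas: "(\<lambda>t. indicator {0..1} t * \<rho> t z) \<in> borel_measurable lborel"
  using rho_int[of z] unfolding set_integrable_def by auto

lemma orth:
  fixes k :: "real \<Rightarrow> real"
  assumes kc: "continuous_on UNIV k" and kb: "\<And>s. \<bar>k s\<bar> \<le> 1"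
  shows "(LINT t:{0..1}|lborel. k t * (\<pi> z * \<rho> t z - \<pi> z * r t z)) = 0"
proof -
  define \<psi> where "\<psi> = (\<lambda>x. LINT s:{x..1}|lborel. k s)"
  have d: "(\<psi> has_real_derivative (\<lambda>t. - k t) t) (at t within {0..1})" if "t \<in> {0..1}" for t
    unfolding \<psi>_def using psi_deriv[OF kc that] by simp
  have c: "continuous_on {0..1} (\<lambda>t. - k t)"
    using kc by (auto intro: continuous_on_subset continuous_intros)
  note CE1 = CE_test(1)[OF d c, of z] and CE2 = CE_test(2)[OF d c, of z]
  have \<psi>1: "\<psi> 1 = 0" unfolding \<psi>_def psi_eq[OF kc] by simp
  have km[measurable]: "k \<in> borel_measurable borel"
    using kc by (intro borel_measurable_continuous_onI)
  have kint: "set_integrable lborel {0..1} k"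
    by (rule borel_integrable_atLeastAtMost') (use kc in \<open>auto intro: continuous_on_subset\<close>)
  have kr: "set_integrable lborel {0..1} (\<lambda>t. k t * (\<pi> z * r t z))"
    by (rule borel_integrable_atLeastAtMost')
      (use kc r_cont[of z] in \<open>auto intro!: continuous_intros intro: continuous_on_subset\<close>)
  have kp: "set_integrable lborel {0..1} (\<lambda>t. k t * \<rho> t z * \<pi> z)"
  proof (rule set_integrable_bound[where f="\<lambda>t. \<rho> t z * \<pi> z"])
    show "set_integrable lborel {0..1} (\<lambda>t. \<rho> t z * \<pi> z)" using rho_int[of z] by simp
    have e: "(\<lambda>t. indicator {0..1} t *\<^sub>R (k t * \<rho> t z * \<pi> z)) = (\<lambda>t. k t * (indicator {0..1} t * \<rho> t z) * \<pi> z)"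
      by (auto simp: fun_eq_iff)
    show "set_borel_measurable lborel {0..1} (\<lambda>t. k t * \<rho> t z * \<pi> z)"
      unfolding set_borel_measurable_def e using rho_meas[of z] by measurable
    show "AE x in lborel. x \<in> {0..1} \<longrightarrow> norm (k x * \<rho> x z * \<pi> z) \<le> norm (\<rho> x z * \<pi> z)"
      by (rule AE_I2) (auto simp: abs_mult mult.assoc intro!: mult_left_le_one_le kb)
  qed
  have kp': "set_integrable lborel {0..1} (\<lambda>t. - k t * \<rho> t z * \<pi> z)"
    using kp by (simp add: set_integrable_def)
  have pG: "set_integrable lborel {0..1} (\<lambda>t. \<psi> t * G z t)"
  proof -
    have "set_integrable lborel {0..1} (\<lambda>t. (- k t * \<rho> t z * \<pi> z + \<psi> t * G z t) - (- k t * \<rho> t z * \<pi> z))"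
      using CE1 kp' by (intro set_integral_diff) auto
    then show ?thesis by simp
  qed
  have fub: "(LINT t:{0..1}|lborel. \<psi> t * G z t) = (LINT s:{0..1}|lborel. k s * (\<pi> z * (r s z - \<rho>A z)))"
  proof -
    have "(LINT t:{0..1}|lborel. \<psi> t * G z t) = (LINT s:{0..1}|lborel. k s * (LINT t:{0..s}|lborel. G z t))"
      unfolding \<psi>_def by (rule fubini_tri[OF km kb G_int])
    also have "\<dots> = (LINT s:{0..1}|lborel. k s * (\<pi> z * (r s z - \<rho>A z)))"
      by (rule set_lebesgue_integral_cong) (auto simp: LG)
    finally show ?thesis .
  qed
  have fub2: "(LINT s:{0..1}|lborel. k s * (\<pi> z * (r s z - \<rho>A z)))
      = (LINT s:{0..1}|lborel. k s * (\<pi> z * r s z)) - (\<pi> z * \<rho>A z) * (LINT s:{0..1}|lborel. k s)"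
  proof -
    have "(LINT s:{0..1}|lborel. k s * (\<pi> z * (r s z - \<rho>A z)))
       = (LINT s:{0..1}|lborel. k s * (\<pi> z * r s z) - (\<pi> z * \<rho>A z) * k s)"
      by (rule set_lebesgue_integral_cong) (auto simp: algebra_simps)
    also have "\<dots> = (LINT s:{0..1}|lborel. k s * (\<pi> z * r s z)) - (LINT s:{0..1}|lborel. (\<pi> z * \<rho>A z) * k s)"
      using kr kint by (intro set_integral_diff) auto
    finally show ?thesis by simp
  qed
  have split1: "(LINT t:{0..1}|lborel. - k t * \<rho> t z * \<pi> z + \<psi> t * G z t)
       = (LINT t:{0..1}|lborel. - k t * \<rho> t z * \<pi> z) + (LINT t:{0..1}|lborel. \<psi> t * G z t)"
    using kp' pG by (rule set_integral_add)
  have neg: "(LINT t:{0..1}|lborel. - k t * \<rho> t z * \<pi> z) = - (LINT t:{0..1}|lborel. k t * \<rho> t z * \<pi> z)"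
    using set_integral_uminus[OF kp] by simp
  have main: "(LINT t:{0..1}|lborel. k t * \<rho> t z * \<pi> z) = (LINT s:{0..1}|lborel. k s * (\<pi> z * r s z))"
    using CE2 split1 neg fub fub2 \<psi>1 by (simp add: \<psi>_def)
  have "(LINT t:{0..1}|lborel. k t * (\<pi> z * \<rho> t z - \<pi> z * r t z))
      = (LINT t:{0..1}|lborel. k t * \<rho> t z * \<pi> z - k t * (\<pi> z * r t z))"
    by (rule set_lebesgue_integral_cong) (auto simp: algebra_simps)
  also have "\<dots> = (LINT t:{0..1}|lborel. k t * \<rho> t z * \<pi> z) - (LINT t:{0..1}|lborel. k t * (\<pi> z * r t z))"
    using kp kr by (rule set_integral_diff)
  finally show ?thesis using main by simp
qed

lemma h_int: "set_integrable lborel {0..1} (\<lambda>t. \<pi> z * \<rho> t z - \<pi> z * r t z)"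
proof (rule set_integral_diff(1))
  show "set_integrable lborel {0..1} (\<lambda>t. \<pi> z * \<rho> t z)" using rho_int[of z] by simp
  show "set_integrable lborel {0..1} (\<lambda>t. \<pi> z * r t z)"
    by (rule borel_integrable_atLeastAtMost') (use r_cont[of z] in \<open>auto intro!: continuous_intros\<close>)
qed

lemma kseq_lim: "(\<lambda>i. max 0 (min 1 (real i * (t - a)))) \<longlonglongrightarrow> indicator {a<..} t"
proof (cases "t \<le> a")
  case True
  have ri: "real i * (t - a) \<le> 0" for i using True by (intro mult_nonneg_nonpos) auto
  have "max 0 (min 1 (real i * (t - a))) = 0" for i
    using ri[of i] by linarith
  then show ?thesis using True by simp
next
  case False
  obtain N :: nat where N: "1 / (t - a) < N" using reals_Archimedean2 by blast
  have "eventually (\<lambda>i. max 0 (min 1 (real i * (t - a))) = 1) sequentially"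
    unfolding eventually_sequentially
  proof (intro exI allI impI)
    fix i assume "N \<le> i"
    then have "1 / (t - a) < real i" using N by linarith
    then have "1 < real i * (t - a)" using False by (simp add: field_simps)
    then show "max 0 (min 1 (real i * (t - a))) = 1" by simp
  qed
  then have "(\<lambda>i. max 0 (min 1 (real i * (t - a)))) \<longlonglongrightarrow> 1"
    by (rule tendsto_eventually)
  then show ?thesis using False by simp
qed

lemma ind_orth: "(LINT t:{0..1}|lborel. indicator {a<..} t * (\<pi> z * \<rho> t z - \<pi> z * r t z)) = 0"
proof -
  define H where "H = (\<lambda>t. indicator {0..1} t * (\<pi> z * \<rho> t z - \<pi> z * r t z))"
  have Hi: "integrable lborel H" using h_int[of z] by (simp add: H_def set_integrable_def)
  have Hm[measurable]: "H \<in> borel_measurable lborel" using Hi by (rule borel_measurable_integrable)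
  define k where "k = (\<lambda>(i::nat) t. max 0 (min 1 (real i * (t - a))))"
  have kc: "continuous_on UNIV (k i)" for i unfolding k_def by (intro continuous_intros)
  have kb: "\<bar>k i t\<bar> \<le> 1" for i t unfolding k_def by auto
  have km[measurable]: "k i \<in> borel_measurable borel" for i
    using kc by (intro borel_measurable_continuous_onI)
  have lim: "(\<lambda>i. integral\<^sup>L lborel (\<lambda>t. k i t * H t)) \<longlonglongrightarrow> integral\<^sup>L lborel (\<lambda>t. indicator {a<..} t * H t)"
  proof (rule integral_dominated_convergence[where w="\<lambda>t. \<bar>H t\<bar>"])
    show "AE t in lborel. (\<lambda>i. k i t * H t) \<longlonglongrightarrow> indicator {a<..} t * H t"
      by (rule AE_I2) (unfold k_def, rule tendsto_mult[OF kseq_lim tendsto_const])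
    show "AE t in lborel. norm (k i t * H t) \<le> \<bar>H t\<bar>" for i
      by (rule AE_I2) (auto simp: abs_mult intro!: mult_left_le_one_le kb)
    show "(\<lambda>t. indicator {a<..} t * H t) \<in> borel_measurable lborel" by measurable
    show "(\<lambda>t. k i t * H t) \<in> borel_measurable lborel" for i by measurable
    show "integrable lborel (\<lambda>t. \<bar>H t\<bar>)" using Hi by (rule integrable_abs)
  qed
  have z0: "integral\<^sup>L lborel (\<lambda>t. k i t * H t) = 0" for i
  proof -
    have "integral\<^sup>L lborel (\<lambda>t. k i t * H t) = (LINT t:{0..1}|lborel. k i t * (\<pi> z * \<rho> t z - \<pi> z * r t z))"
      unfolding set_lebesgue_integral_def H_def by (rule Bochner_Integration.integral_cong) auto
    also have "\<dots> = 0" by (rule orth[OF kc kb])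
    finally show ?thesis .
  qed
  have "integral\<^sup>L lborel (\<lambda>t. indicator {a<..} t * H t) = 0"
    using lim unfolding z0 LIMSEQ_const_iff by simp
  moreover have "integral\<^sup>L lborel (\<lambda>t. indicator {a<..} t * H t) = (LINT t:{0..1}|lborel. indicator {a<..} t * (\<pi> z * \<rho> t z - \<pi> z * r t z))"
    unfolding set_lebesgue_integral_def H_def by (rule Bochner_Integration.integral_cong) auto
  ultimately show ?thesis by simp
qed

lemma rho_eq_r: "AE t in lborel. t \<in> {0..1} \<longrightarrow> \<rho> t z = r t z"
proof -
  have "AE t in lborel. t \<in> {0..1} \<longrightarrow> \<pi> z * \<rho> t z - \<pi> z * r t z = 0"
    by (rule FL[OF h_int ind_orth])
  then show ?thesis
    by eventually_elim (use pi_pos[of z] in auto)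
qed

lemma sum_dlt: "(\<Sum>z\<in>UNIV. dlt z (a::'x)) = (1::real)"
proof -
  have "(\<Sum>z\<in>UNIV. dlt z a) = (\<Sum>z\<in>UNIV. if a = z then 1 else (0::real))"
    by (rule sum.cong) (auto simp: dlt_def)
  then show ?thesis by (simp add: sum.delta sum.delta')
qed

lemma sumG: "(\<Sum>z\<in>UNIV. G z t) = 0"
proof -
  have "(\<Sum>z\<in>UNIV. G z t) = (1/2) * (\<Sum>z\<in>UNIV. \<Sum>a\<in>UNIV. \<Sum>b\<in>UNIV. (dlt z a - dlt z b) * m t a b * Q a b * \<pi> a)"
    unfolding G_def inner_Q_def grad_X_def by (simp add: sum_distrib_left)
  also have "\<dots> = (1/2) * (\<Sum>a\<in>UNIV. \<Sum>b\<in>UNIV. \<Sum>z\<in>UNIV. (dlt z a - dlt z b) * m t a b * Q a b * \<pi> a)"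
  proof -
    have "(\<Sum>z\<in>UNIV. \<Sum>a\<in>UNIV. \<Sum>b\<in>UNIV. (dlt z a - dlt z b) * m t a b * Q a b * \<pi> a)
       = (\<Sum>a\<in>UNIV. \<Sum>z\<in>UNIV. \<Sum>b\<in>UNIV. (dlt z a - dlt z b) * m t a b * Q a b * \<pi> a)"
      by (rule sum.swap)
    also have "\<dots> = (\<Sum>a\<in>UNIV. \<Sum>b\<in>UNIV. \<Sum>z\<in>UNIV. (dlt z a - dlt z b) * m t a b * Q a b * \<pi> a)"
      by (rule sum.cong[OF refl], rule sum.swap)
    finally show ?thesis by simp
  qed
  also have "\<dots> = 0"
  proof -
    have Z: "(\<Sum>z\<in>UNIV. (dlt z a - dlt z b) * c) = 0" for a b :: 'x and c :: real
    proof -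
      have "(\<Sum>z\<in>UNIV. (dlt z a - dlt z b) * c) = (\<Sum>z\<in>UNIV. dlt z a) * c - (\<Sum>z\<in>UNIV. dlt z b) * c"
        by (simp add: sum_distrib_right[symmetric] sum_subtractf left_diff_distrib)
      then show ?thesis by (simp add: sum_dlt)
    qed
    show ?thesis by (simp add: mult.assoc Z)
  qed
  finally show ?thesis .
qed

lemma mass: "t \<in> {0..1} \<Longrightarrow> (\<Sum>z\<in>UNIV. \<pi> z * r t z) = 1"
proof -
  assume t: "t \<in> {0..1}"
  have "(\<Sum>z\<in>UNIV. \<pi> z * r t z) = (\<Sum>z\<in>UNIV. \<pi> z * \<rho>A z + (LINT s:{0..t}|lborel. G z s))"
    by (rule sum.cong) (use LG[OF t] pi_pos in \<open>auto simp: algebra_simps\<close>)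
  also have "\<dots> = 1 + (\<Sum>z\<in>UNIV. (LINT s:{0..t}|lborel. G z s))"
    by (simp add: sum.distrib pA_sum)
  also have "(\<Sum>z\<in>UNIV. (LINT s:{0..t}|lborel. G z s)) = (LINT s:{0..t}|lborel. (\<Sum>z\<in>UNIV. G z s))"
  proof -
    have si: "set_integrable lborel {0..t} (G z)" for z
      by (rule set_integrable_subset[OF G_int]) (use t in auto)
    show ?thesis
      unfolding set_lebesgue_integral_def scaleR_sum_right
      by (rule Bochner_Integration.integral_sum[symmetric]) (use si in \<open>auto simp: set_integrable_def\<close>)
  qed
  finally show ?thesis by (simp add: sumG)
qed

definition Sa :: "real \<Rightarrow> ennreal" where
  "Sa t = (\<Sum>x\<in>UNIV. \<Sum>y\<in>UNIV. alpha \<theta> (\<rho> t x) (\<rho> t y) (m t x y) * ennreal (Q x y * \<pi> x))"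

lemma act': "(1/2) * (\<integral>\<^sup>+ t\<in>{0..1}. Sa t \<partial>lborel) \<le> ennreal Ebar"
  using act unfolding action_def Sa_def .

lemma act_fin: "(\<integral>\<^sup>+ t\<in>{0..1}. Sa t \<partial>lborel) < \<infinity>"
proof (rule ccontr)
  assume "\<not> ?thesis"
  then have X: "(\<integral>\<^sup>+ t\<in>{0..1}. Sa t \<partial>lborel) = \<infinity>" by (simp add: less_top[symmetric])
  have "(1/2) * (\<integral>\<^sup>+ t\<in>{0..1}. Sa t \<partial>lborel) = \<infinity>"
    using X by (simp add: ennreal_mult_top)
  then show False using act' by (simp add: top_unique)
qed

lemma G_isolated: "(\<forall>y. Q z y = 0) \<Longrightarrow> G z t = 0"
proof -
  assume iso: "\<forall>y. Q z y = 0"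
  have Z: "(dlt z a - dlt z b) * m t a b * Q a b * \<pi> a = 0" for a b
  proof (cases "a = z")
    case True then show ?thesis using iso by simp
  next
    case False
    show ?thesis
    proof (cases "b = z")
      case True
      have "Q a b * \<pi> a = \<pi> b * Q b a" using rev[of a b] by (simp add: mult.commute)
      then have "Q a b * \<pi> a = 0" using True iso by simp
      then show ?thesis by (simp add: mult.assoc)
    next
      case False2: False
      then show ?thesis using False by (simp add: dlt_def)
    qed
  qed
  show ?thesis unfolding G_def inner_Q_def grad_X_def by (simp only: Z sum.neutral_const)
qed

lemma alpha_neg: "s < 0 \<Longrightarrow> alpha \<theta> s t mm = \<infinity>"
  by (simp add: alpha_def)

lemma alpha_neg2: "t < 0 \<Longrightarrow> alpha \<theta> s t mm = \<infinity>"
  by (simp add: alpha_def)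

lemma r_nonneg: "t \<in> {0..1} \<Longrightarrow> 0 \<le> r t z"
proof (cases "\<forall>y. Q z y = 0")
  case True
  then have "g s z = 0" for s by (simp add: g_def G_isolated)
  then show ?thesis by (simp add: r_def pA_nn)
next
  case False
  then obtain y where Qy: "Q z y \<noteq> 0" by auto
  then have Qp: "0 < Q z y * \<pi> z" using Q_nn[of z y] pi_pos[of z] by simp
  assume t0: "t \<in> {0..1}"
  show ?thesis
  proof (rule ccontr)
    assume "\<not> 0 \<le> r t z"
    then have neg: "r t z < 0" by simp
    from r_cont[of z] t0 obtain d where d: "d > 0"
      and dd: "\<And>t'. t' \<in> {0..1} \<Longrightarrow> dist t' t < d \<Longrightarrow> dist (r t' z) (r t z) < - r t z"
      unfolding continuous_on_iff using neg by (metis neg_0_less_iff_less)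
    define a where "a = max 0 (t - d/2)"
    define b where "b = min 1 (t + d/2)"
    have ab: "a < b" using t0 d by (auto simp: a_def b_def)
    have sub: "x \<in> {a..b} \<Longrightarrow> x \<in> {0..1} \<and> r x z < 0" for x
    proof -
      assume x: "x \<in> {a..b}"
      then have x01: "x \<in> {0..1}" by (auto simp: a_def b_def)
      have "dist x t < d" using x d by (auto simp: a_def b_def dist_real_def)
      then have "dist (r x z) (r t z) < - r t z" using dd x01 by blast
      then show ?thesis using x01 neg by (auto simp: dist_real_def)
    qed
    have "AE x in lborel. \<infinity> * indicator {a..b} x \<le> Sa x * indicator {0..1} x"
      using rho_eq_r[of z]
    proof eventually_elim
      case (elim x)
      show ?case
      proof (cases "x \<in> {a..b}")
        case True
        with sub[OF True] elim have "\<rho> x z < 0" by auto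
        then have T: "alpha \<theta> (\<rho> x z) (\<rho> x y) (m x z y) * ennreal (Q z y * \<pi> z) = \<infinity>"
          using Qp Qy pi_pos[of z] by (simp only: alpha_neg) (simp add: ennreal_top_mult)
        have "alpha \<theta> (\<rho> x z) (\<rho> x y) (m x z y) * ennreal (Q z y * \<pi> z)
            \<le> (\<Sum>y'\<in>UNIV. alpha \<theta> (\<rho> x z) (\<rho> x y') (m x z y') * ennreal (Q z y' * \<pi> z))"
          by (rule member_le_sum) auto
        also have "\<dots> \<le> Sa x"
          unfolding Sa_def by (rule member_le_sum) auto
        finally have "\<infinity> \<le> Sa x" unfolding T .
        then show ?thesis using sub[OF True] by (simp add: top_unique indicator_def)
      qed simp
    qed
    then have "(\<integral>\<^sup>+ x. \<infinity> * indicator {a..b} x \<partial>lborel) \<le> (\<integral>\<^sup>+ t\<in>{0..1}. Sa t \<partial>lborel)"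
      by (rule nn_integral_mono_AE)
    moreover have "(\<integral>\<^sup>+ x. \<infinity> * indicator {a..b} x \<partial>lborel) = \<infinity>"
      using ab by (simp add: nn_integral_cmult_indicator ennreal_mult_eq_top_iff)
    ultimately show False using act_fin by simp
  qed
qed

definition R :: real where "R = (\<Sum>x\<in>UNIV. 1 / \<pi> x)"

lemma R_ge: "1 / \<pi> z \<le> R"
  unfolding R_def by (rule member_le_sum) (use pi_pos in \<open>auto intro: less_imp_le\<close>)

lemma R_pos: "0 < R"
proof -
  have "0 < 1 / \<pi> undefined" using pi_pos[of undefined] by simp
  then show ?thesis using R_ge[of undefined] by linarith
qed

lemma r_le: "t \<in> {0..1} \<Longrightarrow> r t z \<le> R"
proof -
  assume t: "t \<in> {0..1}"
  have "\<pi> z * r t z \<le> (\<Sum>x\<in>UNIV. \<pi> x * r t x)"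
    by (rule member_le_sum) (use r_nonneg[OF t] pi_pos in \<open>auto intro: mult_nonneg_nonneg less_imp_le\<close>)
  then have "\<pi> z * r t z \<le> 1" using mass[OF t] by simp
  then have "r t z \<le> 1 / \<pi> z" using pi_pos[of z] by (simp add: field_simps)
  then show ?thesis using R_ge[of z] by linarith
qed

lemma AE_rho_bound: "AE t in lborel. t \<in> {0..1} \<longrightarrow> (\<forall>x. 0 \<le> \<rho> t x \<and> \<rho> t x \<le> R)"
proof -
  have "AE t in lborel. \<forall>x\<in>UNIV. t \<in> {0..1} \<longrightarrow> \<rho> t x = r t x"
    by (rule AE_finite_allI[OF finite_class.finite_UNIV]) (rule rho_eq_r)
  then show ?thesis
    by eventually_elim (metis r_nonneg r_le UNIV_I)
qed

lemma mbound: "(\<integral>\<^sup>+ t\<in>{0..1}. ennreal (inner_Q Q \<pi> (m t) (m t)) \<partial>lborel) \<le> ennreal (R * max Ebar 0)"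
proof -
  have "AE t in lborel. ennreal (inner_Q Q \<pi> (m t) (m t)) * indicator {0..1} t
      \<le> ennreal (R / 2) * (Sa t * indicator {0..1} t)"
    using AE_rho_bound
  proof eventually_elim
    case (elim t)
    show ?case
    proof (cases "t \<in> {0..1}")
      case True
      have "ennreal (inner_Q Q \<pi> (m t) (m t))
          = ennreal (1/2) * (\<Sum>x\<in>UNIV. \<Sum>y\<in>UNIV. ennreal ((m t x y)\<^sup>2) * ennreal (Q x y * \<pi> x))"
      proof -
        have nn: "0 \<le> (m t x y)\<^sup>2 * (Q x y * \<pi> x)" for x y
          using Q_nn[of x y] pi_pos[of x] by simp
        have "inner_Q Q \<pi> (m t) (m t) = (1/2) * (\<Sum>x\<in>UNIV. \<Sum>y\<in>UNIV. (m t x y)\<^sup>2 * (Q x y * \<pi> x))"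
          unfolding inner_Q_def by (simp add: power2_eq_square mult_ac)
        then have "ennreal (inner_Q Q \<pi> (m t) (m t)) = ennreal ((1/2) * (\<Sum>x\<in>UNIV. \<Sum>y\<in>UNIV. (m t x y)\<^sup>2 * (Q x y * \<pi> x)))"
          by (rule arg_cong[where f=ennreal])
        also have "\<dots> = ennreal (1/2) * ennreal (\<Sum>x\<in>UNIV. \<Sum>y\<in>UNIV. (m t x y)\<^sup>2 * (Q x y * \<pi> x))"
          by (rule ennreal_mult') simp
        also have "ennreal (\<Sum>x\<in>UNIV. \<Sum>y\<in>UNIV. (m t x y)\<^sup>2 * (Q x y * \<pi> x))
            = (\<Sum>x\<in>UNIV. \<Sum>y\<in>UNIV. ennreal ((m t x y)\<^sup>2 * (Q x y * \<pi> x)))"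
          using nn by (simp add: sum_nonneg)
        also have "\<dots> = (\<Sum>x\<in>UNIV. \<Sum>y\<in>UNIV. ennreal ((m t x y)\<^sup>2) * ennreal (Q x y * \<pi> x))"
          by (intro sum.cong refl ennreal_mult') simp
        finally show ?thesis .
      qed
      also have "\<dots> \<le> ennreal (1/2) * (\<Sum>x\<in>UNIV. \<Sum>y\<in>UNIV. (ennreal R * alpha \<theta> (\<rho> t x) (\<rho> t y) (m t x y)) * ennreal (Q x y * \<pi> x))"
        using elim True
        by (intro mult_left_mono sum_mono mult_right_mono alpha_bound[OF af R_pos]) auto
      also have "\<dots> = ennreal (R / 2) * Sa t"
      proof -
        have h: "ennreal (R / 2) = ennreal (1/2) * ennreal R"
          using ennreal_mult'[of "1/2" R] by simp
        show ?thesis unfolding Sa_def h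
          by (simp only: sum_distrib_left mult_ac)
      qed
      finally show ?thesis using True by simp
    qed simp
  qed
  then have "(\<integral>\<^sup>+ t\<in>{0..1}. ennreal (inner_Q Q \<pi> (m t) (m t)) \<partial>lborel)
      \<le> (\<integral>\<^sup>+ t. ennreal (R / 2) * (Sa t * indicator {0..1} t) \<partial>lborel)"
    by (rule nn_integral_mono_AE)
  also have "\<dots> \<le> ennreal (R / 2) * (\<integral>\<^sup>+ t\<in>{0..1}. Sa t \<partial>lborel)"
    using R_pos by (intro nn_integral_cmult_le) simp
  also have "\<dots> = ennreal R * ((1/2) * (\<integral>\<^sup>+ t\<in>{0..1}. Sa t \<partial>lborel))"
  proof -
    have h1: "(1/2::ennreal) = ennreal (1/2)" using divide_ennreal[of 1 2] by simp
    have h2: "ennreal (R / 2) = ennreal R * ennreal (1/2)"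
      using ennreal_mult''[of "1/2" R] by simp
    show ?thesis unfolding h1 h2 by (simp only: mult.assoc)
  qed
  also have "\<dots> \<le> ennreal R * ennreal Ebar"
    by (rule mult_left_mono[OF act']) simp
  also have "\<dots> = ennreal (R * max Ebar 0)"
    using R_pos by (simp add: ennreal_mult' max_def ennreal_neg)
  finally show ?thesis .
qed

definition W :: real where "W = (\<Sum>x\<in>UNIV. \<Sum>y\<in>UNIV. Q x y * \<pi> x)"

lemma G_sq: "(G z t)\<^sup>2 \<le> W / 2 * inner_Q Q \<pi> (m t) (m t)"
proof -
  define u where "u = (\<lambda>(a, b). (dlt z a - dlt z b) * sqrt (Q a b * \<pi> a))"
  define v where "v = (\<lambda>(a, b). m t a b * sqrt (Q a b * \<pi> a))"
  have nn: "0 \<le> Q a b * \<pi> a" for a b using Q_nn[of a b] pi_pos[of a] by simp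
  have uv: "u (a, b) * v (a, b) = (dlt z a - dlt z b) * m t a b * Q a b * \<pi> a" for a b
  proof -
    have sq: "sqrt (Q a b * \<pi> a) * sqrt (Q a b * \<pi> a) = Q a b * \<pi> a" using nn[of a b] by simp
    have "u (a, b) * v (a, b) = ((dlt z a - dlt z b) * m t a b) * (sqrt (Q a b * \<pi> a) * sqrt (Q a b * \<pi> a))"
      by (simp add: u_def v_def mult_ac)
    then show ?thesis unfolding sq by (simp add: mult_ac)
  qed
  have "G z t = (1/2) * (\<Sum>a\<in>UNIV. \<Sum>b\<in>UNIV. (dlt z a - dlt z b) * m t a b * Q a b * \<pi> a)"
    unfolding G_def inner_Q_def grad_X_def ..
  also have "\<dots> = (1/2) * (\<Sum>a\<in>UNIV. \<Sum>b\<in>UNIV. u (a, b) * v (a, b))"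
    unfolding uv ..
  also have "\<dots> = (1/2) * (\<Sum>p\<in>UNIV. u p * v p)"
    by (simp add: sum.cartesian_product)
  finally have Gp: "G z t = (1/2) * (\<Sum>p\<in>UNIV. u p * v p)" .
  have u2: "(\<Sum>p\<in>UNIV. (u p)\<^sup>2) \<le> W"
  proof -
    have "(\<Sum>p\<in>UNIV. (u p)\<^sup>2) = (\<Sum>a\<in>UNIV. \<Sum>b\<in>UNIV. (u (a, b))\<^sup>2)"
      by (simp add: sum.cartesian_product)
    also have "\<dots> \<le> (\<Sum>a\<in>UNIV. \<Sum>b\<in>UNIV. Q a b * \<pi> a)"
    proof (intro sum_mono)
      fix a b
      have d: "(dlt z a - dlt z b)\<^sup>2 \<le> 1" by (simp add: dlt_def)
      have "(u (a, b))\<^sup>2 = (dlt z a - dlt z b)\<^sup>2 * (Q a b * \<pi> a)"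
        using nn[of a b] by (simp add: u_def power_mult_distrib)
      also have "\<dots> \<le> 1 * (Q a b * \<pi> a)" by (rule mult_right_mono[OF d nn])
      finally show "(u (a, b))\<^sup>2 \<le> Q a b * \<pi> a" by simp
    qed
    finally show ?thesis by (simp add: W_def)
  qed
  have v2: "(\<Sum>p\<in>UNIV. (v p)\<^sup>2) = 2 * inner_Q Q \<pi> (m t) (m t)"
  proof -
    have "(\<Sum>p\<in>UNIV. (v p)\<^sup>2) = (\<Sum>a\<in>UNIV. \<Sum>b\<in>UNIV. (v (a, b))\<^sup>2)"
      by (simp add: sum.cartesian_product)
    also have "\<dots> = (\<Sum>a\<in>UNIV. \<Sum>b\<in>UNIV. m t a b * m t a b * Q a b * \<pi> a)"
      by (intro sum.cong refl) (use nn in \<open>simp add: v_def power_mult_distrib power2_eq_square\<close>)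
    finally show ?thesis by (simp add: inner_Q_def)
  qed
  have "(G z t)\<^sup>2 = (1/4) * (\<Sum>p\<in>UNIV. u p * v p)\<^sup>2"
    unfolding Gp by (simp add: power_mult_distrib power2_eq_square)
  also have "\<dots> \<le> (1/4) * ((\<Sum>p\<in>UNIV. (u p)\<^sup>2) * (\<Sum>p\<in>UNIV. (v p)\<^sup>2))"
    by (intro mult_left_mono Cauchy_Schwarz_ineq_sum) simp
  also have "\<dots> \<le> (1/4) * (W * (\<Sum>p\<in>UNIV. (v p)\<^sup>2))"
    by (intro mult_left_mono mult_right_mono u2) (auto intro: sum_nonneg)
  also have "\<dots> = W / 2 * inner_Q Q \<pi> (m t) (m t)" unfolding v2 by simp
  finally show ?thesis .
qed

lemma QP_nn: "0 \<le> Q x y * \<pi> x"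
  using Q_nn[of x y] pi_pos[of x] by simp

lemma inner_Q_nn: "0 \<le> inner_Q Q \<pi> M M"
proof -
  have t: "0 \<le> M x y * M x y * Q x y * \<pi> x" for x y
    using mult_nonneg_nonneg[OF zero_le_square[of "M x y"] QP_nn[of x y]] by (simp add: mult.assoc)
  have "0 \<le> (\<Sum>x\<in>UNIV. \<Sum>y\<in>UNIV. M x y * M x y * Q x y * \<pi> x)"
    by (intro sum_nonneg t)
  then show ?thesis unfolding inner_Q_def by simp
qed

lemma g_sq: "inner_pi \<pi> (g t) (g t) \<le> real CARD('x) * R * W / 2 * inner_Q Q \<pi> (m t) (m t)"
proof -
  have W0: "0 \<le> W" unfolding W_def by (intro sum_nonneg QP_nn)
  have "g t z * g t z * \<pi> z \<le> R * W / 2 * inner_Q Q \<pi> (m t) (m t)" for z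
  proof -
    have "g t z * g t z * \<pi> z = indicator {0..1} t * ((G z t)\<^sup>2 * (1 / \<pi> z))"
      using pi_pos[of z] by (simp add: g_def power2_eq_square indicator_def field_simps)
    also have "\<dots> \<le> 1 * ((W / 2 * inner_Q Q \<pi> (m t) (m t)) * R)"
      using G_sq[of z t] R_ge[of z] pi_pos[of z] W0 inner_Q_nn
      by (intro mult_mono) (auto simp: indicator_def intro: mult_nonneg_nonneg)
    finally show ?thesis by (simp add: mult_ac)
  qed
  then have "inner_pi \<pi> (g t) (g t) \<le> (\<Sum>z\<in>(UNIV::'x set). R * W / 2 * inner_Q Q \<pi> (m t) (m t))"
    unfolding inner_pi_def by (intro sum_mono) auto
  then show ?thesis by simp
qed

definition Bg :: real where "Bg = real CARD('x) * R * W / 2 * (R * max Ebar 0)"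

lemma W_nn: "0 \<le> W" unfolding W_def by (intro sum_nonneg QP_nn)

lemma Bg_nn: "0 \<le> Bg" unfolding Bg_def using R_pos W_nn by simp

lemma gbound: "(\<integral>\<^sup>+ t\<in>{0..1}. ennreal (inner_pi \<pi> (g t) (g t)) \<partial>lborel) \<le> ennreal Bg"
proof -
  define K where "K = real CARD('x) * R * W / 2"
  have K0: "0 \<le> K" unfolding K_def using R_pos W_nn by simp
  have "(\<integral>\<^sup>+ t\<in>{0..1}. ennreal (inner_pi \<pi> (g t) (g t)) \<partial>lborel)
      \<le> (\<integral>\<^sup>+ t. ennreal K * (ennreal (inner_Q Q \<pi> (m t) (m t)) * indicator {0..1} t) \<partial>lborel)"
  proof (rule nn_integral_mono)
    fix t
    have "ennreal (inner_pi \<pi> (g t) (g t)) \<le> ennreal (K * inner_Q Q \<pi> (m t) (m t))"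
      using g_sq[of t] by (intro ennreal_leI) (simp add: K_def)
    also have "\<dots> = ennreal K * ennreal (inner_Q Q \<pi> (m t) (m t))" using K0 by (rule ennreal_mult')
    finally show "ennreal (inner_pi \<pi> (g t) (g t)) * indicator {0..1} t
        \<le> ennreal K * (ennreal (inner_Q Q \<pi> (m t) (m t)) * indicator {0..1} t)"
      by (auto simp: indicator_def)
  qed
  also have "\<dots> \<le> ennreal K * (\<integral>\<^sup>+ t\<in>{0..1}. ennreal (inner_Q Q \<pi> (m t) (m t)) \<partial>lborel)"
    using K0 by (rule nn_integral_cmult_le)
  also have "\<dots> \<le> ennreal K * ennreal (R * max Ebar 0)"
    by (rule mult_left_mono[OF mbound]) simp
  also have "\<dots> = ennreal (K * (R * max Ebar 0))" by (rule ennreal_mult'[symmetric, OF K0])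
  also have "\<dots> = ennreal Bg" by (simp add: Bg_def K_def)
  finally show ?thesis .
qed

lemma sqpi: "0 \<le> f * f * \<pi> x"
  using mult_nonneg_nonneg[OF zero_le_square[of f] less_imp_le[OF pi_pos[of x]]] .

lemma g_sq_le: "(g t z)\<^sup>2 \<le> R * inner_pi \<pi> (g t) (g t)"
proof -
  have AI: "g t z * g t z * \<pi> z \<le> inner_pi \<pi> (g t) (g t)"
    unfolding inner_pi_def
    by (rule member_le_sum) (simp_all add: sqpi)
  have A0: "0 \<le> g t z * g t z * \<pi> z" by (rule sqpi)
  have p: "0 < \<pi> z" by (rule pi_pos)
  have "(g t z)\<^sup>2 = (g t z * g t z * \<pi> z) * (1 / \<pi> z)"
    using p by (simp add: power2_eq_square)
  also have "\<dots> \<le> inner_pi \<pi> (g t) (g t) * (1 / \<pi> z)"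
    by (rule mult_right_mono[OF AI]) (use p in simp)
  also have "\<dots> \<le> inner_pi \<pi> (g t) (g t) * R"
    by (rule mult_left_mono[OF R_ge]) (use A0 AI in linarith)
  finally show ?thesis by (simp add: mult.commute)
qed

lemma gL2: "(\<integral>\<^sup>+ t. ennreal ((g t z)\<^sup>2) \<partial>lborel) \<le> ennreal (R * Bg)"
proof -
  have "(\<integral>\<^sup>+ t. ennreal ((g t z)\<^sup>2) \<partial>lborel)
      \<le> (\<integral>\<^sup>+ t. ennreal R * (ennreal (inner_pi \<pi> (g t) (g t)) * indicator {0..1} t) \<partial>lborel)"
  proof (rule nn_integral_mono)
    fix t
    show "ennreal ((g t z)\<^sup>2) \<le> ennreal R * (ennreal (inner_pi \<pi> (g t) (g t)) * indicator {0..1} t)"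
    proof (cases "t \<in> {0..1}")
      case True
      have "ennreal ((g t z)\<^sup>2) \<le> ennreal (R * inner_pi \<pi> (g t) (g t))"
        by (intro ennreal_leI g_sq_le)
      also have "\<dots> = ennreal R * ennreal (inner_pi \<pi> (g t) (g t))"
        using R_pos by (intro ennreal_mult') simp
      finally show ?thesis using True by simp
    next
      case False
      then show ?thesis by (simp add: g_def)
    qed
  qed
  also have "\<dots> \<le> ennreal R * (\<integral>\<^sup>+ t\<in>{0..1}. ennreal (inner_pi \<pi> (g t) (g t)) \<partial>lborel)"
    using R_pos by (intro nn_integral_cmult_le) simp
  also have "\<dots> \<le> ennreal R * ennreal Bg"
    by (rule mult_left_mono[OF gbound]) simp
  also have "\<dots> = ennreal (R * Bg)" using R_pos by (simp add: ennreal_mult')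
  finally show ?thesis .
qed

lemma holder_le: "s \<in> {0..1} \<Longrightarrow> t \<in> {0..1} \<Longrightarrow> s \<le> t \<Longrightarrow> \<bar>r t z - r s z\<bar> \<le> sqrt (R * Bg) * sqrt (t - s)"
proof -
  assume s: "s \<in> {0..1}" and t: "t \<in> {0..1}" and st: "s \<le> t"
  have gi: "(\<lambda>x. g x z) integrable_on {0..t}"
    by (rule set_borel_integral_eq_integral(1)) (simp add: g_set_int)
  have "r t z - r s z = integral {0..t} (\<lambda>x. g x z) - integral {0..s} (\<lambda>x. g x z)"
    using s t by (simp add: r_def r_integral)
  also have "\<dots> = integral {s..t} (\<lambda>x. g x z)"
    using Henstock_Kurzweil_Integration.integral_combine[where a=0 and c=s and b=t and f="\<lambda>x. g x z"] s st gi by simp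
  also have "\<dots> = (LINT x:{s..t}|lborel. g x z)"
    by (rule set_borel_integral_eq_integral(2)[symmetric]) (simp add: g_set_int)
  finally have e: "r t z - r s z = (\<integral>x. indicator {s..t} x * g x z \<partial>lborel)"
    by (simp add: set_lebesgue_integral_def)
  define L where "L = (\<integral>x. \<bar>indicator {s..t} x * g x z\<bar> \<partial>lborel)"
  have absle: "\<bar>r t z - r s z\<bar> \<le> L" unfolding e L_def by (rule integral_abs_bound)
  have Li: "integrable lborel (\<lambda>x. \<bar>indicator {s..t} x * g x z\<bar>)"
    using g_set_int[of "{s..t}" z] by (simp add: set_integrable_def)
  have L0: "0 \<le> L" unfolding L_def by simp
  define F where "F = (\<lambda>x. ennreal (\<bar>indicator {s..t} x * g x z\<bar>))"
  define H where "H = (\<lambda>x. indicator {s..t} x :: ennreal)"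
  have Fm[measurable]: "F \<in> borel_measurable lborel" unfolding F_def by measurable
  have Hm[measurable]: "H \<in> borel_measurable lborel" unfolding H_def by measurable
  have eL: "(\<integral>\<^sup>+x. F x * H x \<partial>lborel) = ennreal L"
  proof -
    have "(\<integral>\<^sup>+x. F x * H x \<partial>lborel) = (\<integral>\<^sup>+x. F x \<partial>lborel)"
      by (rule nn_integral_cong) (auto simp: F_def H_def indicator_def)
    also have "\<dots> = ennreal L"
      unfolding F_def L_def by (rule nn_integral_eq_integral[OF Li]) simp
    finally show ?thesis .
  qed
  have eF: "(\<integral>\<^sup>+x. F x ^ 2 \<partial>lborel) \<le> ennreal (R * Bg)"
  proof -
    have "(\<integral>\<^sup>+x. F x ^ 2 \<partial>lborel) \<le> (\<integral>\<^sup>+ x. ennreal ((g x z)\<^sup>2) \<partial>lborel)"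
    proof (rule nn_integral_mono)
      fix x
      have "F x ^ 2 = ennreal ((\<bar>indicator {s..t} x * g x z\<bar>)\<^sup>2)"
        unfolding F_def by (simp add: ennreal_power)
      also have "\<dots> \<le> ennreal ((g x z)\<^sup>2)"
        by (intro ennreal_leI) (auto simp: indicator_def power2_eq_square)
      finally show "F x ^ 2 \<le> ennreal ((g x z)\<^sup>2)" .
    qed
    also have "\<dots> \<le> ennreal (R * Bg)" by (rule gL2)
    finally show ?thesis .
  qed
  have eH: "(\<integral>\<^sup>+x. H x ^ 2 \<partial>lborel) = ennreal (t - s)"
  proof -
    have "(\<integral>\<^sup>+x. H x ^ 2 \<partial>lborel) = (\<integral>\<^sup>+x. H x \<partial>lborel)"
      by (rule nn_integral_cong) (auto simp: H_def indicator_def)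
    also have "\<dots> = ennreal (t - s)" using st by (simp add: H_def)
    finally show ?thesis .
  qed
  have "ennreal L ^ 2 \<le> (\<integral>\<^sup>+x. F x ^ 2 \<partial>lborel) * ennreal (t - s)"
    using Cauchy_Schwarz_nn_integral[OF Fm Hm] unfolding eL eH .
  also have "\<dots> \<le> ennreal (R * Bg) * ennreal (t - s)"
    by (rule mult_right_mono[OF eF]) simp
  also have "\<dots> = ennreal (R * Bg * (t - s))"
    using R_pos Bg_nn by (simp add: ennreal_mult')
  finally have "ennreal (L\<^sup>2) \<le> ennreal (R * Bg * (t - s))"
    using L0 by (simp add: ennreal_power)
  then have "L\<^sup>2 \<le> R * Bg * (t - s)"
    using R_pos Bg_nn st by (subst (asm) ennreal_le_iff) auto
  then have "L \<le> sqrt (R * Bg * (t - s))"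
    using L0 by (simp add: real_le_rsqrt)
  then have "L \<le> sqrt (R * Bg) * sqrt (t - s)" by (simp add: real_sqrt_mult)
  then show ?thesis using absle by linarith
qed

lemma C_eq: "Cst Q \<pi> Ebar = R * max Ebar 0 + Bg + R\<^sup>2 + R + sqrt (R * Bg)"
  unfolding Cst_def Bg_def R_def Rc_def W_def Wc_def ..

lemma sqrtRBg: "0 \<le> sqrt (R * Bg)" using R_pos Bg_nn by simp

lemma Em: "0 \<le> R * max Ebar 0" using R_pos by simp

lemma r_bound: "t \<in> {0..1} \<Longrightarrow> \<bar>r t z\<bar> \<le> R"
  using r_nonneg[of t z] r_le[of t z] by simp

lemma concl:
  fixes C defines "C \<equiv> Cst Q \<pi> Ebar"
  shows "(\<integral>\<^sup>+ t\<in>{0..1}. ennreal (inner_Q Q \<pi> (m t) (m t)) \<partial>lborel) \<le> ennreal C \<and>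
       (\<exists>\<rho>' (g :: real \<Rightarrow> 'x \<Rightarrow> real).
          (AE t in lborel. t \<in> {0..1} \<longrightarrow> \<rho>' t = \<rho> t) \<and>
          (\<forall>x. continuous_on {0..1} (\<lambda>t. \<rho>' t x)) \<and>
          (\<forall>x. set_integrable lborel {0..1} (\<lambda>t. g t x)) \<and>
          (\<forall>t\<in>{0..1}. \<forall>x. \<rho>' t x = \<rho>' 0 x + (LINT s:{0..t}|lborel. g s x)) \<and>
          (\<integral>\<^sup>+ t\<in>{0..1}. ennreal (inner_pi \<pi> (\<rho>' t) (\<rho>' t)) \<partial>lborel)
            + (\<integral>\<^sup>+ t\<in>{0..1}. ennreal (inner_pi \<pi> (g t) (g t)) \<partial>lborel) \<le> ennreal C \<and>
          (\<forall>t\<in>{0..1}. \<forall>x. \<bar>\<rho>' t x\<bar> \<le> C) \<and>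
          (\<forall>s\<in>{0..1}. \<forall>t\<in>{0..1}. \<forall>x. \<bar>\<rho>' t x - \<rho>' s x\<bar> \<le> C * sqrt \<bar>t - s\<bar>))"
proof -
  have Ceq: "C = R * max Ebar 0 + Bg + R\<^sup>2 + R + sqrt (R * Bg)" unfolding C_def by (rule C_eq)
  have R0: "0 \<le> R" using R_pos by simp
  have R2: "0 \<le> R\<^sup>2" by simp
  have A1: "(\<integral>\<^sup>+ t\<in>{0..1}. ennreal (inner_Q Q \<pi> (m t) (m t)) \<partial>lborel) \<le> ennreal C"
    using mbound by (rule order_trans) (use Ceq Bg_nn sqrtRBg R0 in \<open>intro ennreal_leI, simp\<close>)
  have B1: "AE t in lborel. t \<in> {0..1} \<longrightarrow> r t = \<rho> t"
  proof -
    have "AE t in lborel. \<forall>x\<in>UNIV. t \<in> {0..1} \<longrightarrow> \<rho> t x = r t x"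
      by (rule AE_finite_allI[OF finite_class.finite_UNIV]) (rule rho_eq_r)
    then show ?thesis by eventually_elim auto
  qed
  have B4: "\<forall>t\<in>{0..1}. \<forall>x. r t x = r 0 x + (LINT s:{0..t}|lborel. g s x)"
    unfolding r0 by (simp only: r_def) simp
  have B5a: "(\<integral>\<^sup>+ t\<in>{0..1}. ennreal (inner_pi \<pi> (r t) (r t)) \<partial>lborel) \<le> ennreal (R\<^sup>2)"
  proof -
    have "(\<integral>\<^sup>+ t\<in>{0..1}. ennreal (inner_pi \<pi> (r t) (r t)) \<partial>lborel)
        \<le> (\<integral>\<^sup>+ t. ennreal (R\<^sup>2) * indicator {0..1} (t::real) \<partial>lborel)"
    proof (rule nn_integral_mono)
      fix t
      show "ennreal (inner_pi \<pi> (r t) (r t)) * indicator {0..1} t \<le> ennreal (R\<^sup>2) * indicator {0..1} t"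
      proof (cases "t \<in> {0..1}")
        case True
        have "inner_pi \<pi> (r t) (r t) \<le> (\<Sum>x\<in>UNIV. R\<^sup>2 * \<pi> x)"
          unfolding inner_pi_def
        proof (rule sum_mono)
          fix x
          have "r t x * r t x \<le> R * R"
            using r_nonneg[OF True, of x] r_le[OF True, of x] by (intro mult_mono) auto
          then show "r t x * r t x * \<pi> x \<le> R\<^sup>2 * \<pi> x"
            using pi_pos[of x] by (simp add: power2_eq_square)
        qed
        also have "\<dots> = R\<^sup>2" by (simp add: sum_distrib_left[symmetric] pi_sum)
        finally show ?thesis using True by (simp add: ennreal_leI)
      qed simp
    qed
    also have "\<dots> = ennreal (R\<^sup>2)" by (simp add: nn_integral_cmult_indicator)
    finally show ?thesis .
  qed
  have B5: "(\<integral>\<^sup>+ t\<in>{0..1}. ennreal (inner_pi \<pi> (r t) (r t)) \<partial>lborel)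
            + (\<integral>\<^sup>+ t\<in>{0..1}. ennreal (inner_pi \<pi> (g t) (g t)) \<partial>lborel) \<le> ennreal C"
  proof -
    have "(\<integral>\<^sup>+ t\<in>{0..1}. ennreal (inner_pi \<pi> (r t) (r t)) \<partial>lborel)
            + (\<integral>\<^sup>+ t\<in>{0..1}. ennreal (inner_pi \<pi> (g t) (g t)) \<partial>lborel) \<le> ennreal (R\<^sup>2) + ennreal Bg"
      by (rule add_mono[OF B5a gbound])
    also have "\<dots> = ennreal (R\<^sup>2 + Bg)" using Bg_nn by (simp add: ennreal_plus)
    also have "\<dots> \<le> ennreal C" using Ceq Bg_nn sqrtRBg R0 Em by (intro ennreal_leI) simp
    finally show ?thesis .
  qed
  have B6: "\<forall>t\<in>{0..1}. \<forall>x. \<bar>r t x\<bar> \<le> C"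
  proof (intro ballI allI)
    fix t :: real and x assume t: "t \<in> {0..1}"
    have "R \<le> C" using Ceq Bg_nn sqrtRBg R0 Em R2 by linarith
    then show "\<bar>r t x\<bar> \<le> C" using r_bound[OF t, of x] by linarith
  qed
  have B7: "\<forall>s\<in>{0..1}. \<forall>t\<in>{0..1}. \<forall>x. \<bar>r t x - r s x\<bar> \<le> C * sqrt \<bar>t - s\<bar>"
  proof (intro ballI allI)
    fix s t :: real and x assume s: "s \<in> {0..1}" and t: "t \<in> {0..1}"
    have CC: "sqrt (R * Bg) \<le> C" using Ceq Bg_nn sqrtRBg R0 Em R2 by simp
    show "\<bar>r t x - r s x\<bar> \<le> C * sqrt \<bar>t - s\<bar>"
    proof (cases "s \<le> t")
      case True
      have "\<bar>r t x - r s x\<bar> \<le> sqrt (R * Bg) * sqrt (t - s)" by (rule holder_le[OF s t True])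
      also have "\<dots> = sqrt (R * Bg) * sqrt \<bar>t - s\<bar>" using True by simp
      also have "\<dots> \<le> C * sqrt \<bar>t - s\<bar>" by (rule mult_right_mono[OF CC]) simp
      finally show ?thesis .
    next
      case False
      have "\<bar>r s x - r t x\<bar> \<le> sqrt (R * Bg) * sqrt (s - t)" by (rule holder_le[OF t s]) (use False in auto)
      also have "\<dots> = sqrt (R * Bg) * sqrt \<bar>t - s\<bar>" using False by simp
      also have "\<dots> \<le> C * sqrt \<bar>t - s\<bar>" by (rule mult_right_mono[OF CC]) simp
      finally show ?thesis by (simp only: abs_minus_commute)
    qed
  qed
  have B2: "\<forall>x. continuous_on {0..1} (\<lambda>t. r t x)" using r_cont by blast
  have B3: "\<forall>x. set_integrable lborel {0..1} (\<lambda>t. g t x)" by (simp add: g_set_int)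
  show ?thesis
    apply (rule conjI[OF A1])
    apply (rule exI[where x=r])
    apply (rule exI[where x=g])
    apply (intro conjI B1 B2 B3 B4 B5 B6 B7)
    done
qed

end

theorem lemma2p5:
  fixes Q :: "'x::finite \<Rightarrow> 'x \<Rightarrow> real" and \<pi> :: "'x \<Rightarrow> real"
    and \<theta> :: "real \<Rightarrow> real \<Rightarrow> real" and Ebar :: real
  assumes "markov_setting Q \<pi>" and "averaging_function \<theta>"
  shows "\<exists>C::real. \<forall>\<rho>A \<rho>B (\<rho> :: real \<Rightarrow> 'x \<Rightarrow> real) (m :: real \<Rightarrow> 'x \<Rightarrow> 'x \<Rightarrow> real).
     \<rho>A \<in> prob_densities \<pi> \<longrightarrow> \<rho>B \<in> prob_densities \<pi> \<longrightarrow>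
     (\<forall>x. set_borel_measurable lborel {0..1} (\<lambda>t. \<rho> t x)) \<longrightarrow>
     (\<forall>x y. set_borel_measurable lborel {0..1} (\<lambda>t. m t x y)) \<longrightarrow>
     energy \<theta> Q \<pi> \<rho>A \<rho>B \<rho> m \<le> ennreal Ebar \<longrightarrow>
       \<comment> \<open>m bounded in L^2((0,1)) w.r.t. the Q-inner product\<close>
       (\<integral>\<^sup>+ t\<in>{0..1}. ennreal (inner_Q Q \<pi> (m t) (m t)) \<partial>lborel) \<le> ennreal C \<and>
       \<comment> \<open>rho has a representative in H^{1,2} \<inter> C^{0,1/2} with norms bounded by C\<close>
       (\<exists>\<rho>' (g :: real \<Rightarrow> 'x \<Rightarrow> real).
          (AE t in lborel. t \<in> {0..1} \<longrightarrow> \<rho>' t = \<rho> t) \<and>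
          (\<forall>x. continuous_on {0..1} (\<lambda>t. \<rho>' t x)) \<and>
          (\<forall>x. set_integrable lborel {0..1} (\<lambda>t. g t x)) \<and>
          (\<forall>t\<in>{0..1}. \<forall>x. \<rho>' t x = \<rho>' 0 x + (LINT s:{0..t}|lborel. g s x)) \<and>
          (\<integral>\<^sup>+ t\<in>{0..1}. ennreal (inner_pi \<pi> (\<rho>' t) (\<rho>' t)) \<partial>lborel)
            + (\<integral>\<^sup>+ t\<in>{0..1}. ennreal (inner_pi \<pi> (g t) (g t)) \<partial>lborel) \<le> ennreal C \<and>
          (\<forall>t\<in>{0..1}. \<forall>x. \<bar>\<rho>' t x\<bar> \<le> C) \<and>
          (\<forall>s\<in>{0..1}. \<forall>t\<in>{0..1}. \<forall>x. \<bar>\<rho>' t x - \<rho>' s x\<bar> \<le> C * sqrt \<bar>t - s\<bar>))"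
proof (rule exI[where x="Cst Q \<pi> Ebar"], intro allI impI)
  fix \<rho>A \<rho>B :: "'x \<Rightarrow> real" and \<rho> :: "real \<Rightarrow> 'x \<Rightarrow> real" and m :: "real \<Rightarrow> 'x \<Rightarrow> 'x \<Rightarrow> real"
  assume pA: "\<rho>A \<in> prob_densities \<pi>" and pB: "\<rho>B \<in> prob_densities \<pi>"
    and m1: "\<forall>x. set_borel_measurable lborel {0..1} (\<lambda>t. \<rho> t x)"
    and m2: "\<forall>x y. set_borel_measurable lborel {0..1} (\<lambda>t. m t x y)"
    and E: "energy \<theta> Q \<pi> \<rho>A \<rho>B \<rho> m \<le> ennreal Ebar"
  have ce: "(\<rho>, m) \<in> CE Q \<pi> \<rho>A \<rho>B"
  proof (rule ccontr)
    assume "(\<rho>, m) \<notin> CE Q \<pi> \<rho>A \<rho>B"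
    then have "energy \<theta> Q \<pi> \<rho>A \<rho>B \<rho> m = \<infinity>" by (simp add: energy_def)
    then show False using E by (simp add: top_unique)
  qed
  have act: "action \<theta> Q \<pi> \<rho> m \<le> ennreal Ebar" using E ce by (simp add: energy_def)
  interpret L Q \<pi> \<theta> Ebar \<rho>A \<rho>B \<rho> m
    by unfold_locales (fact assms(1), fact assms(2), fact pA, fact ce, fact act)
  show "(\<integral>\<^sup>+ t\<in>{0..1}. ennreal (inner_Q Q \<pi> (m t) (m t)) \<partial>lborel) \<le> ennreal (Cst Q \<pi> Ebar) \<and>
       (\<exists>\<rho>' (g :: real \<Rightarrow> 'x \<Rightarrow> real).
          (AE t in lborel. t \<in> {0..1} \<longrightarrow> \<rho>' t = \<rho> t) \<and>
          (\<forall>x. continuous_on {0..1} (\<lambda>t. \<rho>' t x)) \<and>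
          (\<forall>x. set_integrable lborel {0..1} (\<lambda>t. g t x)) \<and>
          (\<forall>t\<in>{0..1}. \<forall>x. \<rho>' t x = \<rho>' 0 x + (LINT s:{0..t}|lborel. g s x)) \<and>
          (\<integral>\<^sup>+ t\<in>{0..1}. ennreal (inner_pi \<pi> (\<rho>' t) (\<rho>' t)) \<partial>lborel)
            + (\<integral>\<^sup>+ t\<in>{0..1}. ennreal (inner_pi \<pi> (g t) (g t)) \<partial>lborel) \<le> ennreal (Cst Q \<pi> Ebar) \<and>
          (\<forall>t\<in>{0..1}. \<forall>x. \<bar>\<rho>' t x\<bar> \<le> Cst Q \<pi> Ebar) \<and>
          (\<forall>s\<in>{0..1}. \<forall>t\<in>{0..1}. \<forall>x. \<bar>\<rho>' t x - \<rho>' s x\<bar> \<le> Cst Q \<pi> Ebar * sqrt \<bar>t - s\<bar>))"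
    by (rule concl)
qed

end
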